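(* The intuitionistic modal logic $\mathsf{KM}\oplus\mathsf{LC}$ is exactly the set of formulas valid in the Kripke frame $(\omega,\ge,>)$, i.e. with worlds the natural numbers, intuitionistic order $m\unlhd n$ iff $m\ge n$, and modal accessibility $m\prec n$ iff $m>n$.
   Context: Formulas are built from variables, $\bot,\to,\wedge,\vee,\Box$. In a frame $(W,\unlhd,\prec)$, valuations assign $\unlhd$-upward closed sets to variables, connectives are interpreted in the Heyting algebra of upsets, and $\Box A=\{w\mid\forall x(w\prec x\Rightarrow x\in A)\}$; validity means denoting $W$ under every valuation. $\mathsf{KM}\oplus\mathsf{LC}$ is the smallest set of formulas containing all axioms of intuitionistic propositional logic, $\Box(A\to B)\to(\Box A\to\Box B)$, $(\Box A\to A)\to A$, $\Box A\to((B\to A)\vee B)$ and $(A\to B)\vee(B\to A)$, closed under modus ponens, necessitation and substitution. *)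

theory Defs
  imports Main
begin

datatype fm =
    Var nat
  | Bot
  | Imp fm fm
  | And fm fm
  | Or fm fm
  | Box fm

primrec subst :: "(nat \<Rightarrow> fm) \<Rightarrow> fm \<Rightarrow> fm" where
  "subst s (Var p) = s p"
| "subst s Bot = Bot"
| "subst s (Imp A B) = Imp (subst s A) (subst s B)"
| "subst s (And A B) = And (subst s A) (subst s B)"
| "subst s (Or A B) = Or (subst s A) (subst s B)"
| "subst s (Box A) = Box (subst s A)"

inductive KM_LC :: "fm \<Rightarrow> bool" where
  ax_K1: "KM_LC (Imp A (Imp B A))"
| ax_S: "KM_LC (Imp (Imp A (Imp B C)) (Imp (Imp A B) (Imp A C)))"
| ax_and1: "KM_LC (Imp (And A B) A)"
| ax_and2: "KM_LC (Imp (And A B) B)"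
| ax_andI: "KM_LC (Imp A (Imp B (And A B)))"
| ax_or1: "KM_LC (Imp A (Or A B))"
| ax_or2: "KM_LC (Imp B (Or A B))"
| ax_orE: "KM_LC (Imp (Imp A C) (Imp (Imp B C) (Imp (Or A B) C)))"
| ax_bot: "KM_LC (Imp Bot A)"
| ax_boxK: "KM_LC (Imp (Box (Imp A B)) (Imp (Box A) (Box B)))"
| ax_loeb: "KM_LC (Imp (Imp (Box A) A) A)"
| ax_KM: "KM_LC (Imp (Box A) (Or (Imp B A) B))"
| ax_LC: "KM_LC (Or (Imp A B) (Imp B A))"
| mp: "KM_LC (Imp A B) \<Longrightarrow> KM_LC A \<Longrightarrow> KM_LC B"
| nec: "KM_LC A \<Longrightarrow> KM_LC (Box A)"
| sub: "KM_LC A \<Longrightarrow> KM_LC (subst s A)"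

primrec sem :: "('w \<Rightarrow> 'w \<Rightarrow> bool) \<Rightarrow> ('w \<Rightarrow> 'w \<Rightarrow> bool) \<Rightarrow> (nat \<Rightarrow> 'w set) \<Rightarrow> fm \<Rightarrow> 'w set" where
  "sem le R V (Var p) = V p"
| "sem le R V Bot = {}"
| "sem le R V (Imp A B) = {w. \<forall>v. le w v \<longrightarrow> v \<in> sem le R V A \<longrightarrow> v \<in> sem le R V B}"
| "sem le R V (And A B) = sem le R V A \<inter> sem le R V B"
| "sem le R V (Or A B) = sem le R V A \<union> sem le R V B"
| "sem le R V (Box A) = {w. \<forall>x. R w x \<longrightarrow> x \<in> sem le R V A}"

definition upset :: "('w \<Rightarrow> 'w \<Rightarrow> bool) \<Rightarrow> 'w set \<Rightarrow> bool" where
  "upset le U \<longleftrightarrow> (\<forall>w v. w \<in> U \<longrightarrow> le w v \<longrightarrow> v \<in> U)"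

definition valid_in :: "('w \<Rightarrow> 'w \<Rightarrow> bool) \<Rightarrow> ('w \<Rightarrow> 'w \<Rightarrow> bool) \<Rightarrow> fm \<Rightarrow> bool" where
  "valid_in le R A \<longleftrightarrow> (\<forall>V. (\<forall>p. upset le (V p)) \<longrightarrow> sem le R V A = UNIV)"

definition omega_le :: "nat \<Rightarrow> nat \<Rightarrow> bool" where "omega_le m n \<longleftrightarrow> m \<ge> n"
definition omega_R :: "nat \<Rightarrow> nat \<Rightarrow> bool" where "omega_R m n \<longleftrightarrow> m > n"

end

theory Submission
  imports Defs
begin


abbreviation S where "S V A \<equiv> sem omega_le omega_R V A"

lemma sem_down:
  assumes V: "\<forall>p. upset omega_le (V p)"
  shows "w \<in> S V A \<Longrightarrow> v \<le> w \<Longrightarrow> v \<in> S V A"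
proof (induction A arbitrary: w v)
  case (Var x)
  then show ?case using V by (auto simp: upset_def omega_le_def)
next
  case (Imp A1 A2)
  then show ?case by (auto simp: omega_le_def)
next
  case (Box A)
  then show ?case by (auto simp: omega_R_def)
qed auto

lemmas sd = sem_down[unfolded omega_le_def[abs_def] omega_R_def[abs_def]]

lemma sem_subst: "sem le R V (subst s A) = sem le R (\<lambda>p. sem le R V (s p)) A"
  by (induction A) auto

lemma down_upset: "(\<forall>p. upset omega_le (V p)) \<Longrightarrow> upset omega_le (S V A)"
  using sem_down[of V] by (auto simp: upset_def omega_le_def)

lemma loeb_valid:
  assumes V: "\<forall>p. upset omega_le (V p)"
  shows "S V (Imp (Imp (Box A) A) A) = UNIV"
proof -
  have "\<And>v. v \<le> w \<longrightarrow> v \<in> S V (Imp (Box A) A) \<longrightarrow> v \<in> S V A" for w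
  proof -
    fix v show "v \<le> w \<longrightarrow> v \<in> S V (Imp (Box A) A) \<longrightarrow> v \<in> S V A"
    proof (induction v rule: less_induct)
      case (less v)
      show ?case
      proof (intro impI)
        assume vw: "v \<le> w" and vi: "v \<in> S V (Imp (Box A) A)"
        have "v \<in> S V (Box A)"
        proof -
          have "x \<in> S V A" if "x < v" for x
          proof -
            have "x \<in> S V (Imp (Box A) A)" using sem_down[OF V vi, of x] that by simp
            then show ?thesis using less[OF that] that vw by simp
          qed
          then show ?thesis by (simp add: omega_R_def)
        qed
        then show "v \<in> S V A" using vi by (auto simp: omega_le_def)
      qed
    qed
  qed
  then show ?thesis by (auto simp: omega_le_def)
qed

lemma soundness: "KM_LC A \<Longrightarrow> valid_in omega_le omega_R A"
proof (induction rule: KM_LC.induct)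
  case (ax_loeb A)
  then show ?case using loeb_valid unfolding valid_in_def by blast
next
  case (ax_KM A B)
  show ?case unfolding valid_in_def
  proof (intro allI impI)
    fix V :: "nat \<Rightarrow> nat set" assume V: "\<forall>p. upset omega_le (V p)"
    show "S V (Imp (Box A) (Or (Imp B A) B)) = UNIV"
    proof (auto simp: omega_le_def omega_R_def)
      fix w v u
      assume "\<forall>x<v. x \<in> S V A" "v \<notin> S V B" "u \<le> v" "u \<in> S V B"
      then show "u \<in> S V A" by (cases "u = v") auto
    qed
  qed
next
  case (ax_LC A B)
  show ?case unfolding valid_in_def
  proof (intro allI impI)
    fix V :: "nat \<Rightarrow> nat set" assume V: "\<forall>p. upset omega_le (V p)"
    have "w \<in> S V (Imp A B) \<or> w \<in> S V (Imp B A)" for w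
    proof (rule ccontr)
      assume "\<not> ?thesis"
      then obtain v1 v2 where a: "v1 \<le> w" "v1 \<in> S V A" "v1 \<notin> S V B" "v2 \<le> w" "v2 \<in> S V B" "v2 \<notin> S V A"
        by (auto simp: omega_le_def)
      show False
      proof (cases "v1 \<le> v2")
        case True then show ?thesis using sem_down[OF V a(5) True] a by simp
      next
        case False then show ?thesis using sem_down[OF V a(2), of v2] a by simp
      qed
    qed
    then show "S V (Or (Imp A B) (Imp B A)) = UNIV" by auto
  qed
next
  case (mp A B)
  then show ?case unfolding valid_in_def by (auto simp: omega_le_def)
next
  case (nec A)
  then show ?case unfolding valid_in_def by auto
next
  case (sub A s)
  show ?case unfolding valid_in_def
  proof (intro allI impI)
    fix V :: "nat \<Rightarrow> nat set" assume V: "\<forall>p. upset omega_le (V p)"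
    have "\<forall>p. upset omega_le (S V (s p))" using down_upset[OF V] by blast
    then have "S (\<lambda>p. S V (s p)) A = UNIV" using sub.IH unfolding valid_in_def
      by (metis (no_types, lifting))
    then show "S V (subst s A) = UNIV" by (simp add: sem_subst)
  qed
qed ((auto simp: valid_in_def omega_le_def omega_R_def intro: sd)+, (meson order.trans order_refl less_le_trans)+)



inductive derives :: "fm set \<Rightarrow> fm \<Rightarrow> bool" for T where
  dhyp: "B \<in> T \<Longrightarrow> derives T B"
| dthm: "KM_LC B \<Longrightarrow> derives T B"
| dmp: "derives T (Imp B C) \<Longrightarrow> derives T B \<Longrightarrow> derives T C"

lemma imp_self: "KM_LC (Imp A A)"
proof -
  have 1: "KM_LC (Imp (Imp A (Imp (Imp A A) A)) (Imp (Imp A (Imp A A)) (Imp A A)))" by (rule ax_S)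
  have 2: "KM_LC (Imp A (Imp (Imp A A) A))" by (rule ax_K1)
  have 3: "KM_LC (Imp A (Imp A A))" by (rule ax_K1)
  show ?thesis using mp[OF mp[OF 1 2] 3] .
qed

lemma derives_mono: "derives T B \<Longrightarrow> T \<subseteq> T' \<Longrightarrow> derives T' B"
proof (induction rule: derives.induct)
  case (dhyp B) then show ?case by (simp add: derives.dhyp subsetD)
next
  case (dthm B) then show ?case by (simp add: derives.dthm)
next
  case (dmp B C) then show ?case by (metis derives.dmp)
qed

lemma deduction: "derives (insert C T) B \<Longrightarrow> derives T (Imp C B)"
proof (induction rule: derives.induct)
  case (dhyp B)
  then show ?case
  proof (cases "B = C")
    case True then show ?thesis using imp_self by (simp add: dthm)
  next
    case False then have "B \<in> T" using dhyp by simp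
    then show ?thesis using derives.dmp[OF derives.dthm[OF ax_K1] derives.dhyp] by blast
  qed
next
  case (dthm B)
  then show ?case using derives.dmp[OF derives.dthm[OF ax_K1] derives.dthm] by blast
next
  case (dmp B D)
  then show ?case using derives.dmp[OF derives.dmp[OF derives.dthm[OF ax_S]]] by blast
qed

lemma derives_empty: "derives {} B \<Longrightarrow> KM_LC B"
  by (induction rule: derives.induct) (auto intro: KM_LC.mp)

lemma derives_finite: "derives T B \<Longrightarrow> \<exists>S. finite S \<and> S \<subseteq> T \<and> derives S B"
proof (induction rule: derives.induct)
  case (dhyp B)
  then show ?case by (intro exI[of _ "{B}"]) (simp add: derives.dhyp)
next
  case (dthm B)
  then show ?case by (intro exI[of _ "{}"]) (simp add: derives.dthm)
next
  case (dmp B C)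
  then obtain S1 S2 where "finite S1" "S1 \<subseteq> T" "derives S1 (Imp B C)"
    "finite S2" "S2 \<subseteq> T" "derives S2 B" by blast
  then show ?case
    by (intro exI[of _ "S1 \<union> S2"]) (meson derives.dmp derives_mono Un_upper1 Un_upper2 finite_UnI Un_least)
qed

lemma box_intro: "derives T B \<Longrightarrow> derives T (Box B)"
proof -
  assume dB: "derives T B"
  define x where "x = And (Box B) B"
  have k: "KM_LC (Imp (Box x) (Box B))"
    unfolding x_def using KM_LC.mp[OF ax_boxK nec[OF ax_and2]] .
  have "derives (insert (Box x) T) x"
  proof -
    have "derives (insert (Box x) T) (Box B)"
      using derives.dmp[OF derives.dthm[OF k] derives.dhyp] by blast
    moreover have "derives (insert (Box x) T) B" using dB derives_mono by blast
    ultimately show ?thesis unfolding x_def using derives.dmp[OF derives.dmp[OF derives.dthm[OF ax_andI]]] by blast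
  qed
  then have "derives T (Imp (Box x) x)" by (rule deduction)
  then have "derives T x" using derives.dmp[OF derives.dthm[OF ax_loeb]] by blast
  then show ?thesis unfolding x_def using derives.dmp[OF derives.dthm[OF ax_and1]] by blast
qed

lemma lindenbaum:
  assumes "\<not> KM_LC A0"
  shows "\<exists>F. (\<forall>B. derives F B \<longrightarrow> B \<in> F) \<and> (\<forall>B C. Or B C \<in> F \<longrightarrow> B \<in> F \<or> C \<in> F)
     \<and> A0 \<notin> F"
proof -
  let ?A = "{T. \<not> derives T A0}"
  have "\<forall>C\<in>chains ?A. \<Union>C \<in> ?A"
  proof
    fix C assume C: "C \<in> chains ?A"
    show "\<Union>C \<in> ?A"
    proof (cases "C = {}")
      case True then show ?thesis using assms derives_empty by auto
    next
      case False
      have "\<not> derives (\<Union>C) A0"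
      proof
        assume "derives (\<Union>C) A0"
        then obtain S where S: "finite S" "S \<subseteq> \<Union>C" "derives S A0" using derives_finite by blast
        have "subset.chain ?A C" using C chains_alt_def by blast
        then obtain B where "B \<in> C" "S \<subseteq> B"
          using finite_subset_Union_chain[OF S(1) S(2) False] by blast
        then have "derives B A0" using S derives_mono by blast
        then show False using C \<open>B \<in> C\<close> unfolding chains_def by blast
      qed
      then show ?thesis by simp
    qed
  qed
  then obtain M where M: "M \<in> ?A" "\<forall>X\<in>?A. M \<subseteq> X \<longrightarrow> X = M"
    using Zorn_Lemma by blast
  have ext: "derives (insert B M) A0" if "B \<notin> M" for B
    using M that by blast
  have cl: "\<forall>B. derives M B \<longrightarrow> B \<in> M"
  proof (intro allI impI)
    fix B assume dB: "derives M B"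
    show "B \<in> M"
    proof (rule ccontr)
      assume "B \<notin> M"
      then have "derives M (Imp B A0)" using ext deduction by blast
      then show False using dB M(1) by (auto intro: dmp)
    qed
  qed
  have pr: "\<forall>B C. Or B C \<in> M \<longrightarrow> B \<in> M \<or> C \<in> M"
  proof (intro allI impI)
    fix B C assume o: "Or B C \<in> M"
    show "B \<in> M \<or> C \<in> M"
    proof (rule ccontr)
      assume "\<not> ?thesis"
      then have "derives M (Imp B A0)" "derives M (Imp C A0)" using ext deduction by blast+
      then have "derives M A0" using o derives.dmp[OF derives.dmp[OF derives.dmp[OF derives.dthm[OF ax_orE]]] derives.dhyp] by blast
      then show False using M(1) by blast
    qed
  qed
  show ?thesis using cl pr M(1) by (intro exI[of _ M]) (auto intro: dhyp)
qed

primrec subfms :: "fm \<Rightarrow> fm set" where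
  "subfms (Var p) = {Var p}"
| "subfms Bot = {Bot}"
| "subfms (Imp A B) = insert (Imp A B) (subfms A \<union> subfms B)"
| "subfms (And A B) = insert (And A B) (subfms A \<union> subfms B)"
| "subfms (Or A B) = insert (Or A B) (subfms A \<union> subfms B)"
| "subfms (Box A) = insert (Box A) (subfms A)"

lemma finite_subfms: "finite (subfms A)"
  by (induction A) auto

lemma self_subfms: "A \<in> subfms A"
  by (cases A) auto

lemma subfms_trans: "B \<in> subfms A \<Longrightarrow> subfms B \<subseteq> subfms A"
  by (induction A) auto



locale pth =
  fixes F :: "fm set" and X :: "fm set"
  assumes closed: "derives F B \<Longrightarrow> B \<in> F"
    and prime: "Or B C \<in> F \<Longrightarrow> B \<in> F \<or> C \<in> F"
    and noBot: "Bot \<notin> F"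
    and finX: "finite X"
begin

definition lq where "lq B C \<longleftrightarrow> Imp B C \<in> F"

lemma inF_thm: "KM_LC B \<Longrightarrow> B \<in> F"
  by (rule closed) (rule derives.dthm)

lemma inF_mp: "Imp B C \<in> F \<Longrightarrow> B \<in> F \<Longrightarrow> C \<in> F"
  by (rule closed, rule derives.dmp[OF derives.dhyp derives.dhyp])

lemma inF_imp: "derives (insert B F) C \<Longrightarrow> Imp B C \<in> F"
  by (rule closed) (rule deduction)

lemma hypF: "B \<in> F \<Longrightarrow> derives (insert D F) B"
  by (simp add: derives.dhyp)

lemma hypD: "derives (insert D F) D"
  by (simp add: derives.dhyp)

lemmas dmp = derives.dmp
lemmas dthm = derives.dthm

lemma lq_refl: "lq B B"
  unfolding lq_def by (rule inF_thm[OF imp_self])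

lemma lq_trans: "lq B C \<Longrightarrow> lq C D \<Longrightarrow> lq B D"
  unfolding lq_def by (rule inF_imp, rule dmp[OF hypF hypF[THEN dmp, OF _ hypD]])

lemma total: "lq B C \<or> lq C B"
  unfolding lq_def using prime[OF inF_thm[OF ax_LC]] .

lemma lq_top: "C \<in> F \<Longrightarrow> lq B C"
  unfolding lq_def by (rule inF_imp) (rule hypF)

lemma lq_bot: "lq Bot B"
  unfolding lq_def by (rule inF_thm[OF ax_bot])

lemma in_lq: "B \<in> F \<Longrightarrow> lq B C \<Longrightarrow> C \<in> F"
  unfolding lq_def using inF_mp by blast

lemma imp_down: "\<not> lq B C \<Longrightarrow> lq (Imp B C) C"
proof -
  assume n: "\<not> lq B C"
  show ?thesis
  proof (cases "lq (Imp B C) B")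
    case True
    then show ?thesis unfolding lq_def
      by (intro inF_imp) (rule dmp[OF hypD dmp[OF hypF hypD]])
  next
    case False
    then have "lq B (Imp B C)" using total by blast
    then have "lq B C" unfolding lq_def
      by (intro inF_imp) (rule dmp[OF dmp[OF hypF hypD] hypD])
    then show ?thesis using n by blast
  qed
qed

lemma imp_up: "lq C (Imp B C)"
  unfolding lq_def by (rule inF_thm[OF ax_K1])

lemma box_up: "B \<in> F \<Longrightarrow> Box B \<in> F"
  by (rule closed, rule box_intro, rule derives.dhyp)

lemma box_ge: "lq B (Box B)"
  unfolding lq_def by (rule inF_imp) (rule box_intro[OF hypD])

lemma box_strict: "B \<notin> F \<Longrightarrow> \<not> lq (Box B) B"
  unfolding lq_def using inF_mp[OF inF_thm[OF ax_loeb]] by blast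

lemma box_succ: "lq B D \<Longrightarrow> \<not> lq D B \<Longrightarrow> lq (Box B) D"
proof -
  assume a: "lq B D" "\<not> lq D B"
  have o: "derives (insert (Box B) F) (Or (Imp D B) D)"
    using dmp[OF dthm[OF ax_KM] hypD] .
  have l1: "Imp (Imp D B) D \<in> F" using lq_trans[OF imp_down[OF a(2)] a(1)] unfolding lq_def .
  have l2: "Imp D D \<in> F" using lq_refl unfolding lq_def .
  show ?thesis unfolding lq_def
    by (rule inF_imp) (rule dmp[OF dmp[OF dmp[OF dthm[OF ax_orE] hypF[OF l1]] hypF[OF l2]] o])
qed

lemma and_lq1: "lq (And B C) B" unfolding lq_def by (rule inF_thm[OF ax_and1])
lemma and_lq2: "lq (And B C) C" unfolding lq_def by (rule inF_thm[OF ax_and2])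
lemma and_glb: "lq B C \<Longrightarrow> lq B (And B C)"
  unfolding lq_def by (rule inF_imp) (rule dmp[OF dmp[OF dthm[OF ax_andI] hypD] dmp[OF hypF hypD]])
lemma and_glb2: "lq C B \<Longrightarrow> lq C (And B C)"
  unfolding lq_def by (rule inF_imp) (rule dmp[OF dmp[OF dthm[OF ax_andI] dmp[OF hypF hypD]] hypD])
lemma and_in: "And B C \<in> F \<longleftrightarrow> B \<in> F \<and> C \<in> F"
proof
  assume "And B C \<in> F" then show "B \<in> F \<and> C \<in> F" using and_lq1 and_lq2 in_lq by blast
next
  assume "B \<in> F \<and> C \<in> F"
  then show "And B C \<in> F"
    by (intro closed) (rule dmp[OF dmp[OF dthm[OF ax_andI] derives.dhyp] derives.dhyp], auto)
qed

lemma or_lq1: "lq B (Or B C)" unfolding lq_def by (rule inF_thm[OF ax_or1])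
lemma or_lq2: "lq C (Or B C)" unfolding lq_def by (rule inF_thm[OF ax_or2])
lemma or_lub: "lq B C \<Longrightarrow> lq (Or B C) C"
  using lq_refl[of C] unfolding lq_def
  by (intro inF_imp) (rule dmp[OF dmp[OF dmp[OF dthm[OF ax_orE] hypF] hypF] hypD])
lemma or_lub2: "lq C B \<Longrightarrow> lq (Or B C) B"
  using lq_refl[of B] unfolding lq_def
  by (intro inF_imp) (rule dmp[OF dmp[OF dmp[OF dthm[OF ax_orE] hypF] hypF] hypD])

definition cls where "cls E = {D \<in> X. lq D E \<and> lq E D}"
definition below where "below E = {D \<in> X. \<not> lq E D}"
definition hh where "hh E = card (cls ` below E)"
definition MM where "MM = card (cls ` {D \<in> X. D \<notin> F})"

lemma fin_below: "finite (cls ` below E)"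
  unfolding below_def using finX by auto

lemma cls_eq: "lq D B \<Longrightarrow> lq B D \<Longrightarrow> cls D = cls B"
  unfolding cls_def using lq_trans by blast

lemma cls_notin: "B \<in> X \<Longrightarrow> cls B \<notin> cls ` below B"
proof
  assume B: "B \<in> X" and "cls B \<in> cls ` below B"
  then obtain D where D: "D \<in> below B" "cls B = cls D" by auto
  have "B \<in> cls B" unfolding cls_def using B lq_refl by auto
  then have "lq B D" using D unfolding cls_def by auto
  then show False using D unfolding below_def by auto
qed

lemma hh_mono: "lq B C \<Longrightarrow> hh B \<le> hh C"
proof -
  assume "lq B C"
  then have "below B \<subseteq> below C" unfolding below_def using lq_trans[OF \<open>lq B C\<close>] by blast
  then show ?thesis unfolding hh_def by (intro card_mono fin_below image_mono)
qed

lemma hh_cong: "lq B C \<Longrightarrow> lq C B \<Longrightarrow> hh B = hh C"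
  using hh_mono[of B C] hh_mono[of C B] by simp

lemma hh_strict: "C \<in> X \<Longrightarrow> \<not> lq B C \<Longrightarrow> hh C < hh B"
proof -
  assume C: "C \<in> X" and n: "\<not> lq B C"
  then have cb: "lq C B" using total[of B C] by simp
  have sub: "below C \<subseteq> below B" unfolding below_def using lq_trans[OF cb] by blast
  have "C \<in> below B" using C n unfolding below_def by simp
  then have m: "cls C \<in> cls ` below B" by (rule imageI)
  have ne: "cls ` below C \<noteq> cls ` below B" using cls_notin[OF C] m by metis
  have "cls ` below C \<subset> cls ` below B" using image_mono[OF sub] ne by (rule psubsetI)
  then show ?thesis unfolding hh_def by (intro psubset_card_mono fin_below)
qed

lemma hh_lt: "B \<in> X \<Longrightarrow> B \<notin> F \<Longrightarrow> hh B < MM"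
proof -
  assume B: "B \<in> X" "B \<notin> F"
  have "insert (cls B) (cls ` below B) \<subseteq> cls ` {D \<in> X. D \<notin> F}"
  proof -
    have "below B \<subseteq> {D \<in> X. D \<notin> F}" unfolding below_def using lq_top[of _ B] by blast
    then show ?thesis using B by blast
  qed
  then have "card (insert (cls B) (cls ` below B)) \<le> MM"
    unfolding MM_def using finX by (intro card_mono) auto
  then show ?thesis using cls_notin[OF B(1)] fin_below unfolding hh_def by simp
qed

lemma hh_box: "B \<in> X \<Longrightarrow> B \<notin> F \<Longrightarrow> hh (Box B) = Suc (hh B)"
proof -
  assume B: "B \<in> X" "B \<notin> F"
  have "cls ` below (Box B) = insert (cls B) (cls ` below B)"
  proof
    show "cls ` below (Box B) \<subseteq> insert (cls B) (cls ` below B)"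
    proof
      fix E assume "E \<in> cls ` below (Box B)"
      then obtain D where D: "D \<in> X" "\<not> lq (Box B) D" "E = cls D" unfolding below_def by auto
      show "E \<in> insert (cls B) (cls ` below B)"
      proof (cases "lq B D")
        case False then show ?thesis using D unfolding below_def by auto
      next
        case True
        then have "lq D B" using box_succ[OF True] D(2) by blast
        then have "cls D = cls B" using cls_eq True by blast
        then show ?thesis using D(3) by simp
      qed
    qed
  next
    have "B \<in> below (Box B)" using B(1) box_strict[OF B(2)] unfolding below_def by simp
    moreover have "below B \<subseteq> below (Box B)" unfolding below_def using lq_trans[OF box_ge[of B]] by blast
    ultimately show "insert (cls B) (cls ` below B) \<subseteq> cls ` below (Box B)" by auto
  qed
  then show ?thesis using cls_notin[OF B(1)] fin_below unfolding hh_def by simp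
qed

lemma hh_boxtop: "B \<in> X \<Longrightarrow> B \<notin> F \<Longrightarrow> Box B \<in> F \<Longrightarrow> MM \<le> Suc (hh B)"
proof -
  assume B: "B \<in> X" "B \<notin> F" "Box B \<in> F"
  have "cls ` {D \<in> X. D \<notin> F} \<subseteq> insert (cls B) (cls ` below B)"
  proof
    fix E assume "E \<in> cls ` {D \<in> X. D \<notin> F}"
    then obtain D where D: "D \<in> X" "D \<notin> F" "E = cls D" by auto
    show "E \<in> insert (cls B) (cls ` below B)"
    proof (cases "lq B D")
      case False then show ?thesis using D unfolding below_def by auto
    next
      case True
      have "lq D B"
      proof (rule ccontr)
        assume "\<not> lq D B"
        then have "lq (Box B) D" using box_succ[OF True] by blast
        then show False using in_lq[OF B(3)] D(2) by blast
      qed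
      then have "cls D = cls B" using cls_eq True by blast
      then show ?thesis using D(3) by simp
    qed
  qed
  then have "MM \<le> card (insert (cls B) (cls ` below B))"
    unfolding MM_def using fin_below by (intro card_mono) auto
  also have "\<dots> \<le> Suc (hh B)" unfolding hh_def using fin_below by (simp add: card_insert_if)
  finally show ?thesis .
qed

lemma hh_bot: "hh Bot = 0"
  unfolding hh_def below_def using lq_bot by simp

definition VV :: "nat \<Rightarrow> nat set" where
  "VV p = (if Var p \<in> F then UNIV else {..<hh (Var p)})"

lemma VV_upset: "upset omega_le (VV p)"
  unfolding upset_def VV_def omega_le_def by auto

lemma ole: "w \<in> S V (Imp A B) \<longleftrightarrow> (\<forall>v\<le>w. v \<in> S V A \<longrightarrow> v \<in> S V B)"
  by (simp add: omega_le_def)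
lemma oR: "w \<in> S V (Box A) \<longleftrightarrow> (\<forall>x<w. x \<in> S V A)"
  by (simp add: omega_R_def)
declare sem.simps(3)[simp del] sem.simps(6)[simp del]

lemma truth: "subfms B \<subseteq> X \<Longrightarrow>
   (B \<notin> F \<longrightarrow> S VV B = {..<hh B}) \<and> (B \<in> F \<longrightarrow> {..<MM} \<subseteq> S VV B)"
proof (induction B)
  case (Var x)
  then show ?case by (auto simp: VV_def)
next
  case Bot
  then show ?case using noBot hh_bot by auto
next
  case (And B C)
  then have X: "B \<in> X" "C \<in> X" "subfms B \<subseteq> X" "subfms C \<subseteq> X"
    using self_subfms by auto
  note IH = And.IH(1)[OF X(3)] And.IH(2)[OF X(4)]
  show ?case
  proof (cases "And B C \<in> F")
    case True then show ?thesis using and_in IH by auto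
  next
    case False
    show ?thesis
    proof (cases "lq B C")
      case True
      then have bn: "B \<notin> F" using False and_in in_lq[of B C] by blast
      have h: "hh (And B C) = hh B" using hh_cong[OF and_lq1 and_glb[OF True]] .
      have "{..<hh B} \<subseteq> S VV C"
      proof (cases "C \<in> F")
        case True
        have "{..<hh B} \<subseteq> {..<MM}" using hh_lt[OF X(1) bn] by auto
        then show ?thesis using IH(2)[THEN conjunct2, rule_format, OF True] by (rule subset_trans)
      next
        case False then show ?thesis using IH hh_mono[OF \<open>lq B C\<close>] by auto
      qed
      then show ?thesis using False IH bn h by auto
    next
      case nt: False
      then have T: "lq C B" using total by blast
      then have cn: "C \<notin> F" using False and_in in_lq[of C B] by blast
      have h: "hh (And B C) = hh C" using hh_cong[OF and_lq2 and_glb2[OF T]] .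
      have "{..<hh C} \<subseteq> S VV B"
      proof (cases "B \<in> F")
        case True
        have "{..<hh C} \<subseteq> {..<MM}" using hh_lt[OF X(2) cn] by auto
        then show ?thesis using IH(1)[THEN conjunct2, rule_format, OF True] by (rule subset_trans)
      next
        case False then show ?thesis using IH hh_mono[OF T] by auto
      qed
      then show ?thesis using False IH cn h by auto
    qed
  qed
next
  case (Or B C)
  then have X: "B \<in> X" "C \<in> X" "subfms B \<subseteq> X" "subfms C \<subseteq> X"
    using self_subfms by auto
  note IH = Or.IH(1)[OF X(3)] Or.IH(2)[OF X(4)]
  show ?case
  proof (cases "B \<in> F \<or> C \<in> F")
    case True
    then have "Or B C \<in> F" using in_lq[OF _ or_lq1[of B C]] in_lq[OF _ or_lq2[of C B]] by blast
    then show ?thesis using True IH by auto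
  next
    case False
    then have on: "Or B C \<notin> F" using prime[of B C] by blast
    show ?thesis
    proof (cases "lq B C")
      case True
      have h: "hh (Or B C) = hh C" using hh_cong[OF or_lub[OF True] or_lq2] .
      then show ?thesis using False IH on hh_mono[OF True] by auto
    next
      case nt: False
      then have T: "lq C B" using total by blast
      have h: "hh (Or B C) = hh B" using hh_cong[OF or_lub2[OF T] or_lq1] .
      then show ?thesis using False IH on hh_mono[OF T] by auto
    qed
  qed
next
  case (Imp B C)
  then have X: "B \<in> X" "C \<in> X" "subfms B \<subseteq> X" "subfms C \<subseteq> X"
    using self_subfms by auto
  note IH = Imp.IH(1)[OF X(3)] Imp.IH(2)[OF X(4)]
  show ?case
  proof (cases "lq B C")
    case True
    then have iF: "Imp B C \<in> F" unfolding lq_def .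
    have "{..<MM} \<subseteq> S VV (Imp B C)"
    proof
      fix w assume w: "w \<in> {..<MM}"
      have "v \<in> S VV C" if "v \<le> w" "v \<in> S VV B" for v
      proof (cases "B \<in> F")
        case True have "C \<in> F" using in_lq[OF True \<open>lq B C\<close>] by simp
        moreover have "v \<in> {..<MM}" using w that by auto
        ultimately show ?thesis using IH(2) by blast
      next
        case bF: False
        then have vB: "v < hh B" using IH that by auto
        show ?thesis
        proof (cases "C \<in> F")
          case True
          have "v \<in> {..<MM}" using vB hh_lt[OF X(1) bF] by auto
          then show ?thesis using IH(2)[THEN conjunct2, rule_format, OF True] by (rule subsetD[rotated])
        next
          case False then show ?thesis using IH vB hh_mono[OF \<open>lq B C\<close>] by auto
        qed
      qed
      then show "w \<in> S VV (Imp B C)" by (auto simp: ole)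
    qed
    then show ?thesis using iF by blast
  next
    case False
    then have iF: "Imp B C \<notin> F" unfolding lq_def .
    have cn: "C \<notin> F" using False lq_top[of C B] by blast
    have h: "hh (Imp B C) = hh C" using hh_cong[OF imp_down[OF False] imp_up] .
    have hcB: "hh C \<in> S VV B"
    proof (cases "B \<in> F")
      case True
      have "hh C \<in> {..<MM}" using hh_lt[OF X(2) cn] by auto
      then show ?thesis using IH(1)[THEN conjunct2, rule_format, OF True] by (rule subsetD[rotated])
    next
      case bF: False then show ?thesis using IH hh_strict[OF X(2) False] by auto
    qed
    have "S VV (Imp B C) = {..<hh C}"
    proof
      show "S VV (Imp B C) \<subseteq> {..<hh C}"
      proof
        fix w assume w: "w \<in> S VV (Imp B C)"
        show "w \<in> {..<hh C}"
        proof (rule ccontr)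
          assume "w \<notin> {..<hh C}"
          then have "hh C \<le> w" by auto
          then have "hh C \<in> S VV C" using w hcB by (auto simp: ole)
          then show False using IH cn by auto
        qed
      qed
    next
      show "{..<hh C} \<subseteq> S VV (Imp B C)" using IH cn by (auto simp: ole)
    qed
    then show ?thesis using iF h by auto
  qed
next
  case (Box B)
  then have X: "B \<in> X" "subfms B \<subseteq> X" using self_subfms by auto
  note IH = Box.IH[OF X(2)]
  show ?case
  proof (cases "B \<in> F")
    case True
    have "Box B \<in> F" using box_up[OF True] by simp
    moreover have "{..<MM} \<subseteq> S VV (Box B)"
    proof
      fix w assume w: "w \<in> {..<MM}"
      have sb: "{..<MM} \<subseteq> S VV B" using IH True by blast
      have "x \<in> S VV B" if "x < w" for x using sb w that by auto
      then show "w \<in> S VV (Box B)" by (simp add: oR)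
    qed
    ultimately show ?thesis by blast
  next
    case False
    have sB: "S VV B = {..<hh B}" using IH False by blast
    have eq: "(\<forall>x<w. x < hh B) \<longleftrightarrow> w < Suc (hh B)" for w
    proof
      assume a: "\<forall>x<w. x < hh B"
      show "w < Suc (hh B)"
      proof (rule ccontr)
        assume "\<not> w < Suc (hh B)"
        then have "hh B < w" by simp
        then show False using a by blast
      qed
    qed auto
    have sb: "S VV (Box B) = {..<Suc (hh B)}"
      by (rule set_eqI) (simp add: oR sB eq)
    show ?thesis
    proof (cases "Box B \<in> F")
      case True
      have "MM \<le> Suc (hh B)" using hh_boxtop[OF X(1) False True] .
      then have "{..<MM} \<subseteq> S VV (Box B)" unfolding sb by auto
      then show ?thesis using True by blast
    next
      case bF: False
      have "S VV (Box B) = {..<hh (Box B)}" unfolding sb hh_box[OF X(1) False] ..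
      then show ?thesis using bF by blast
    qed
  qed
qed

end

theorem theorem5p16:
  shows "KM_LC A \<longleftrightarrow> valid_in omega_le omega_R A"
proof
  assume "KM_LC A" then show "valid_in omega_le omega_R A" by (rule soundness)
next
  assume v: "valid_in omega_le omega_R A"
  show "KM_LC A"
  proof (rule ccontr)
    assume "\<not> KM_LC A"
    then obtain F where F: "\<forall>B. derives F B \<longrightarrow> B \<in> F" "\<forall>B C. Or B C \<in> F \<longrightarrow> B \<in> F \<or> C \<in> F" "A \<notin> F"
      using lindenbaum[OF \<open>\<not> KM_LC A\<close>] by (elim exE conjE) blast
    have nb: "Bot \<notin> F"
    proof
      assume "Bot \<in> F"
      then have "derives F A" by (rule derives.dmp[OF derives.dthm[OF ax_bot] derives.dhyp])
      then show False using F(1) F(3) by simp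
    qed
    interpret pth F "subfms A"
    proof (rule pth.intro[OF _ _ nb finite_subfms])
      fix B assume "derives F B" then show "B \<in> F" using F(1) by blast
    next
      fix B C assume "Or B C \<in> F" then show "B \<in> F \<or> C \<in> F" using F(2) by blast
    qed
    have "S VV A = {..<hh A}" using truth[OF subset_refl] F(3) by simp
    moreover have "S VV A = UNIV"
    proof -
      have "\<forall>p. upset omega_le (VV p)" using VV_upset by blast
      then show ?thesis using v unfolding valid_in_def by blast
    qed
    ultimately have "hh A \<in> {..<hh A}" by simp
    then show False by simp
  qed
qed

end
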